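(* Let $\rho$ be a density operator on $H$ and let $f$ be any random variable. Then $$\int f\,d\mu_\rho=\int_0^\infty\mu_\rho\left(\{x: f(x)>\lambda\}\right)d\lambda-\int_0^\infty\mu_\rho\left(\{x: f(x)<-\lambda\}\right)d\lambda.$$
   Context: $(\Omega,\mathcal{A},\nu)$ is a probability space and $H=L_2(\Omega,\mathcal{A},\nu)$ is the complex Hilbert space with inner product $\langle f,g\rangle=\int\bar f g\,d\nu$. A random variable is a real-valued $f\in H$; $\chi_A$ is the characteristic function of $A\in\mathcal{A}$, and $\mu(A)$ is the operator $u\mapsto\left(\int_A u\,d\nu\right)\chi_A$ on $H$. A density operator is a positive trace-class operator of trace $1$; for a density operator $\rho$, $\mu_\rho(A)=\mathrm{tr}[\rho\mu(A)]$. For a random variable $f\ge 0$, its quantization is $(\widehat f u)(y)=\int\min[f(x),f(y)]\,u(x)\,d\nu(x)$; for general $f$, $\widehat f=\widehat{f^+}-\widehat{f^-}$ with $f^+=\max(f,0)$, $f^-=-\min(f,0)$. The $q$-integral is $\int f\,d\mu_\rho=\mathrm{tr}(\rho\widehat f)$. *)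

theory Defs
  imports "HOL-Probability.Probability"
begin

text \<open>The Hilbert space H = L2(Omega, A, nu), represented by (complex-valued)
  measurable square-integrable functions; vectors equal nu-a.e. represent the same
  element of H, and all notions below are invariant under a.e. equality.\<close>

definition L2 :: "'a measure \<Rightarrow> ('a \<Rightarrow> complex) set" where
  "L2 M = {u. u \<in> borel_measurable M \<and> integrable M (\<lambda>x. (cmod (u x))\<^sup>2)}"

definition inner_L2 :: "'a measure \<Rightarrow> ('a \<Rightarrow> complex) \<Rightarrow> ('a \<Rightarrow> complex) \<Rightarrow> complex" where
  "inner_L2 M u v = (LINT x|M. cnj (u x) * v x)"

definition norm_L2 :: "'a measure \<Rightarrow> ('a \<Rightarrow> complex) \<Rightarrow> real" where
  "norm_L2 M u = sqrt (LINT x|M. (cmod (u x))\<^sup>2)"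

definition bounded_op :: "'a measure \<Rightarrow> (('a \<Rightarrow> complex) \<Rightarrow> ('a \<Rightarrow> complex)) \<Rightarrow> bool" where
  "bounded_op M T \<longleftrightarrow>
     (\<forall>u\<in>L2 M. T u \<in> L2 M) \<and>
     (\<forall>u\<in>L2 M. \<forall>v\<in>L2 M. (AE x in M. u x = v x) \<longrightarrow> (AE x in M. T u x = T v x)) \<and>
     (\<forall>u\<in>L2 M. \<forall>v\<in>L2 M. AE x in M. T (\<lambda>y. u y + v y) x = T u x + T v x) \<and>
     (\<forall>u\<in>L2 M. \<forall>c. AE x in M. T (\<lambda>y. c * u y) x = c * T u x) \<and>
     (\<exists>C. \<forall>u\<in>L2 M. norm_L2 M (T u) \<le> C * norm_L2 M u)"

definition positive_op :: "'a measure \<Rightarrow> (('a \<Rightarrow> complex) \<Rightarrow> ('a \<Rightarrow> complex)) \<Rightarrow> bool" where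
  "positive_op M T \<longleftrightarrow> (\<forall>u\<in>L2 M. Im (inner_L2 M u (T u)) = 0 \<and> 0 \<le> Re (inner_L2 M u (T u)))"

definition onb :: "'a measure \<Rightarrow> ('a \<Rightarrow> complex) set \<Rightarrow> bool" where
  "onb M B \<longleftrightarrow> B \<subseteq> L2 M \<and>
     (\<forall>e\<in>B. inner_L2 M e e = 1) \<and>
     (\<forall>e\<in>B. \<forall>e'\<in>B. e \<noteq> e' \<longrightarrow> inner_L2 M e e' = 0) \<and>
     (\<forall>u\<in>L2 M. (\<forall>e\<in>B. inner_L2 M e u = 0) \<longrightarrow> norm_L2 M u = 0)"

text \<open>Trace of an operator, computed in an orthonormal basis (basis independent for
  trace-class operators).\<close>
definition tr :: "'a measure \<Rightarrow> (('a \<Rightarrow> complex) \<Rightarrow> ('a \<Rightarrow> complex)) \<Rightarrow> complex" where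
  "tr M T = infsum (\<lambda>e. inner_L2 M e (T e)) (SOME B. onb M B)"

text \<open>Density operator: positive, trace class (for positive operators: the diagonal sum
  converges in one, equivalently every, orthonormal basis), of trace 1.\<close>
definition density_op :: "'a measure \<Rightarrow> (('a \<Rightarrow> complex) \<Rightarrow> ('a \<Rightarrow> complex)) \<Rightarrow> bool" where
  "density_op M \<rho> \<longleftrightarrow> bounded_op M \<rho> \<and> positive_op M \<rho> \<and>
     (\<forall>B. onb M B \<longrightarrow> ((\<lambda>e. inner_L2 M e (\<rho> e)) has_sum 1) B)"

definition mu_op :: "'a measure \<Rightarrow> 'a set \<Rightarrow> ('a \<Rightarrow> complex) \<Rightarrow> ('a \<Rightarrow> complex)" where
  "mu_op M A u = (\<lambda>y. (LINT x:A|M. u x) * indicator A y)"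

definition mu_rho :: "'a measure \<Rightarrow> (('a \<Rightarrow> complex) \<Rightarrow> ('a \<Rightarrow> complex)) \<Rightarrow> 'a set \<Rightarrow> complex" where
  "mu_rho M \<rho> A = tr M (\<lambda>u. \<rho> (mu_op M A u))"

definition quant_pos :: "'a measure \<Rightarrow> ('a \<Rightarrow> real) \<Rightarrow> ('a \<Rightarrow> complex) \<Rightarrow> ('a \<Rightarrow> complex)" where
  "quant_pos M f u = (\<lambda>y. LINT x|M. complex_of_real (min (f x) (f y)) * u x)"

definition quant :: "'a measure \<Rightarrow> ('a \<Rightarrow> real) \<Rightarrow> ('a \<Rightarrow> complex) \<Rightarrow> ('a \<Rightarrow> complex)" where
  "quant M f u = (\<lambda>y. quant_pos M (\<lambda>x. max (f x) 0) u y - quant_pos M (\<lambda>x. - min (f x) 0) u y)"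

definition q_integral :: "'a measure \<Rightarrow> (('a \<Rightarrow> complex) \<Rightarrow> ('a \<Rightarrow> complex)) \<Rightarrow> ('a \<Rightarrow> real) \<Rightarrow> complex" where
  "q_integral M \<rho> f = tr M (\<lambda>u. \<rho> (quant M f u))"

end

theory Submission
  imports Defs
begin
lemma L2_iff: "u \<in> L2 M \<longleftrightarrow> u \<in> borel_measurable M \<and> integrable M (\<lambda>x. (cmod (u x))\<^sup>2)"
  by (simp add: L2_def)

lemma borel_measurable_cnj[measurable (raw)]:
  assumes "f \<in> borel_measurable M" shows "(\<lambda>x. cnj (f x)) \<in> borel_measurable M"
  by (rule measurable_compose[OF assms borel_measurable_continuous_onI]) (intro continuous_intros)

context prob_space
begin

lemma L2_meas: "u \<in> L2 M \<Longrightarrow> u \<in> borel_measurable M"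
  by (simp add: L2_def)

lemma L2_sq: "u \<in> L2 M \<Longrightarrow> integrable M (\<lambda>x. (cmod (u x))\<^sup>2)"
  by (simp add: L2_def)

lemma sq_bound: "((a::real) + b)\<^sup>2 \<le> 2 * a\<^sup>2 + 2 * b\<^sup>2"
proof -
  have "0 \<le> (a - b)\<^sup>2" by simp
  thus ?thesis unfolding power2_eq_square by (simp add: algebra_simps)
qed

lemma L2_add:
  assumes "u \<in> L2 M" "v \<in> L2 M" shows "(\<lambda>x. u x + v x) \<in> L2 M"
proof -
  have um: "u \<in> borel_measurable M" and vm: "v \<in> borel_measurable M"
    and ui: "integrable M (\<lambda>x. (cmod (u x))\<^sup>2)" and vi: "integrable M (\<lambda>x. (cmod (v x))\<^sup>2)"
    using assms by (auto simp: L2_def)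
  have meas: "(\<lambda>x. u x + v x) \<in> borel_measurable M" using um vm by measurable
  have int: "integrable M (\<lambda>x. 2 * (cmod (u x))\<^sup>2 + 2 * (cmod (v x))\<^sup>2)"
    using ui vi by (intro Bochner_Integration.integrable_add integrable_mult_right)
  have bnd: "norm ((cmod (u x + v x))\<^sup>2) \<le> norm (2 * (cmod (u x))\<^sup>2 + 2 * (cmod (v x))\<^sup>2)" for x
  proof -
    have "cmod (u x + v x) \<le> cmod (u x) + cmod (v x)" by (rule norm_triangle_ineq)
    hence "(cmod (u x + v x))\<^sup>2 \<le> (cmod (u x) + cmod (v x))\<^sup>2"
      by (intro power_mono) auto
    also have "\<dots> \<le> 2 * (cmod (u x))\<^sup>2 + 2 * (cmod (v x))\<^sup>2" by (rule sq_bound)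
    finally show ?thesis by simp
  qed
  have "integrable M (\<lambda>x. (cmod (u x + v x))\<^sup>2)"
    by (rule Bochner_Integration.integrable_bound[OF int]) (use meas bnd in auto)
  then show ?thesis using meas by (simp add: L2_def)
qed

lemma L2_scale:
  assumes "u \<in> L2 M" shows "(\<lambda>x. c * u x) \<in> L2 M"
proof -
  have um: "u \<in> borel_measurable M" and ui: "integrable M (\<lambda>x. (cmod (u x))\<^sup>2)"
    using assms by (auto simp: L2_def)
  have "integrable M (\<lambda>x. (cmod c)\<^sup>2 * (cmod (u x))\<^sup>2)"
    using ui by (rule integrable_mult_right)
  moreover have "(\<lambda>x. (cmod (c * u x))\<^sup>2) = (\<lambda>x. (cmod c)\<^sup>2 * (cmod (u x))\<^sup>2)"
    by (simp add: norm_mult power_mult_distrib)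
  moreover have "(\<lambda>x. c * u x) \<in> borel_measurable M" using um by measurable
  ultimately show ?thesis by (simp add: L2_def)
qed

lemma L2_uminus:
  assumes "u \<in> L2 M" shows "(\<lambda>x. - u x) \<in> L2 M"
  using L2_scale[OF assms, of "-1"] by simp

lemma L2_diff:
  assumes "u \<in> L2 M" "v \<in> L2 M" shows "(\<lambda>x. u x - v x) \<in> L2 M"
  using L2_add[OF assms(1) L2_uminus[OF assms(2)]] by simp

lemma L2_sum:
  assumes "finite F" "\<And>i. i \<in> F \<Longrightarrow> f i \<in> L2 M"
  shows "(\<lambda>x. \<Sum>i\<in>F. f i x) \<in> L2 M"
  using assms
proof (induction F rule: finite_induct)
  case empty
  then show ?case by (simp add: L2_def)
next
  case (insert a F)
  then show ?case by (simp add: L2_add)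
qed

lemma L2_indicator:
  assumes "A \<in> sets M" shows "(\<lambda>x. indicator A x :: complex) \<in> L2 M"
proof -
  have "(\<lambda>x. (cmod (indicator A x :: complex))\<^sup>2) = (\<lambda>x. indicator A x :: real)"
    by (auto simp: indicator_def)
  moreover have "integrable M (\<lambda>x. indicator A x :: real)"
    using assms emeasure_finite[of A] by (intro integrable_real_indicator) (auto simp: less_top[symmetric])
  moreover have "(\<lambda>x. indicator A x :: complex) \<in> borel_measurable M" using assms by measurable
  ultimately show ?thesis by (simp add: L2_def)
qed

lemma L2_real:
  assumes "h \<in> borel_measurable M" "integrable M (\<lambda>x. (h x)\<^sup>2)"
  shows "(\<lambda>x. complex_of_real (h x)) \<in> L2 M"
  using assms by (simp add: L2_def)

lemma L2_prod_integrable: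
  assumes "u \<in> L2 M" "v \<in> L2 M"
  shows "integrable M (\<lambda>x. cmod (u x) * cmod (v x))"
proof -
  have int: "integrable M (\<lambda>x. (cmod (u x))\<^sup>2 + (cmod (v x))\<^sup>2)"
    using assms by (intro Bochner_Integration.integrable_add) (auto simp: L2_def)
  have meas: "(\<lambda>x. cmod (u x) * cmod (v x)) \<in> borel_measurable M"
    using assms by (auto simp: L2_def)
  have bnd: "norm (cmod (u x) * cmod (v x)) \<le> norm ((cmod (u x))\<^sup>2 + (cmod (v x))\<^sup>2)" for x
  proof -
    have "0 \<le> (cmod (u x) - cmod (v x))\<^sup>2" by simp
    hence "2 * (cmod (u x) * cmod (v x)) \<le> (cmod (u x))\<^sup>2 + (cmod (v x))\<^sup>2"
      by (simp add: power2_diff)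
    moreover have "0 \<le> cmod (u x) * cmod (v x)" by simp
    ultimately have "cmod (u x) * cmod (v x) \<le> (cmod (u x))\<^sup>2 + (cmod (v x))\<^sup>2" by linarith
    then show ?thesis by simp
  qed
  show ?thesis
    by (rule Bochner_Integration.integrable_bound[OF int]) (use meas bnd in auto)
qed

lemma L2_inner_integrable:
  assumes "u \<in> L2 M" "v \<in> L2 M"
  shows "integrable M (\<lambda>x. cnj (u x) * v x)"
proof (rule Bochner_Integration.integrable_bound[OF L2_prod_integrable[OF assms]])
  have [measurable]: "u \<in> borel_measurable M" "v \<in> borel_measurable M" using assms by (auto simp: L2_def)
  show "(\<lambda>x. cnj (u x) * v x) \<in> borel_measurable M" by measurable
  show "AE x in M. norm (cnj (u x) * v x) \<le> norm (cmod (u x) * cmod (v x))"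
    by (simp add: norm_mult)
qed

lemma L2_const: "(\<lambda>x. c) \<in> L2 M"
  by (simp add: L2_def)

lemma L2_integrable:
  assumes "u \<in> L2 M" shows "integrable M u"
  using L2_inner_integrable[OF L2_const[of 1] assms] by simp

lemma L2_norm_integrable:
  assumes "u \<in> L2 M" shows "integrable M (\<lambda>x. cmod (u x))"
  using L2_prod_integrable[OF L2_const[of 1] assms] by simp

lemma inner_add_right:
  assumes "u \<in> L2 M" "v \<in> L2 M" "w \<in> L2 M"
  shows "inner_L2 M u (\<lambda>x. v x + w x) = inner_L2 M u v + inner_L2 M u w"
  unfolding inner_L2_def using L2_inner_integrable[OF assms(1,2)] L2_inner_integrable[OF assms(1,3)]
  by (simp add: distrib_left)

lemma inner_scale_right: "inner_L2 M u (\<lambda>x. c * v x) = c * inner_L2 M u v"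
  unfolding inner_L2_def by (simp add: mult.left_commute)

lemma inner_scale_left: "inner_L2 M (\<lambda>x. c * u x) v = cnj c * inner_L2 M u v"
  unfolding inner_L2_def by (simp add: mult.assoc)

lemma inner_cnj: "cnj (inner_L2 M u v) = inner_L2 M v u"
proof -
  have "cnj (inner_L2 M u v) = (LINT x|M. cnj (cnj (u x) * v x))"
    unfolding inner_L2_def by (simp only: Bochner_Integration.integral_cnj)
  also have "\<dots> = inner_L2 M v u"
    unfolding inner_L2_def by (rule Bochner_Integration.integral_cong) (auto simp: mult.commute)
  finally show ?thesis .
qed

lemma inner_diff_right:
  assumes "u \<in> L2 M" "v \<in> L2 M" "w \<in> L2 M"
  shows "inner_L2 M u (\<lambda>x. v x - w x) = inner_L2 M u v - inner_L2 M u w"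
  unfolding inner_L2_def using L2_inner_integrable[OF assms(1,2)] L2_inner_integrable[OF assms(1,3)]
  by (simp add: right_diff_distrib)

lemma inner_add_left:
  assumes "u \<in> L2 M" "v \<in> L2 M" "w \<in> L2 M"
  shows "inner_L2 M (\<lambda>x. v x + w x) u = inner_L2 M v u + inner_L2 M w u"
  unfolding inner_L2_def using L2_inner_integrable[OF assms(2,1)] L2_inner_integrable[OF assms(3,1)]
  by (simp add: distrib_right)

lemma inner_diff_left:
  assumes "u \<in> L2 M" "v \<in> L2 M" "w \<in> L2 M"
  shows "inner_L2 M (\<lambda>x. v x - w x) u = inner_L2 M v u - inner_L2 M w u"
  unfolding inner_L2_def using L2_inner_integrable[OF assms(2,1)] L2_inner_integrable[OF assms(3,1)]
  by (simp add: left_diff_distrib)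

lemma inner_sum_right:
  assumes "finite F" "u \<in> L2 M" "\<And>i. i \<in> F \<Longrightarrow> f i \<in> L2 M"
  shows "inner_L2 M u (\<lambda>x. \<Sum>i\<in>F. f i x) = (\<Sum>i\<in>F. inner_L2 M u (f i))"
  unfolding inner_L2_def using assms L2_inner_integrable
  by (simp add: sum_distrib_left)

lemma inner_sum_left:
  assumes "finite F" "u \<in> L2 M" "\<And>i. i \<in> F \<Longrightarrow> f i \<in> L2 M"
  shows "inner_L2 M (\<lambda>x. \<Sum>i\<in>F. f i x) u = (\<Sum>i\<in>F. inner_L2 M (f i) u)"
proof -
  have "inner_L2 M (\<lambda>x. \<Sum>i\<in>F. f i x) u = cnj (inner_L2 M u (\<lambda>x. \<Sum>i\<in>F. f i x))"
    by (simp add: inner_cnj)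
  also have "\<dots> = (\<Sum>i\<in>F. inner_L2 M (f i) u)"
    using inner_sum_right[OF assms] by (simp add: inner_cnj)
  finally show ?thesis .
qed

lemma inner_self: "inner_L2 M u u = complex_of_real (LINT x|M. (cmod (u x))\<^sup>2)"
proof -
  have "inner_L2 M u u = (LINT x|M. complex_of_real ((cmod (u x))\<^sup>2))"
    unfolding inner_L2_def by (rule Bochner_Integration.integral_cong[OF refl]) (subst complex_norm_square, rule mult.commute)
  also have "\<dots> = complex_of_real (LINT x|M. (cmod (u x))\<^sup>2)"
    by (rule integral_complex_of_real)
  finally show ?thesis .
qed

lemma inner_self_nonneg: "0 \<le> (LINT x|M. (cmod (u x))\<^sup>2)"
  by (rule integral_nonneg_AE) auto

lemma inner_cong_AE:
  assumes "u \<in> borel_measurable M" "u' \<in> borel_measurable M" "v \<in> borel_measurable M" "v' \<in> borel_measurable M"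
    "AE x in M. u x = u' x" "AE x in M. v x = v' x"
  shows "inner_L2 M u v = inner_L2 M u' v'"
  unfolding inner_L2_def
proof (rule integral_cong_AE)
  show "(\<lambda>x. cnj (u x) * v x) \<in> borel_measurable M"
    by (intro borel_measurable_times borel_measurable_cnj assms(1,3))
  show "(\<lambda>x. cnj (u' x) * v' x) \<in> borel_measurable M"
    by (intro borel_measurable_times borel_measurable_cnj assms(2,4))
  show "AE x in M. cnj (u x) * v x = cnj (u' x) * v' x" using assms(5,6) by eventually_elim simp
qed

end

locale dens = prob_space M for M :: "'a measure" +
  fixes \<rho> :: "('a \<Rightarrow> complex) \<Rightarrow> ('a \<Rightarrow> complex)"
  assumes bnd: "bounded_op M \<rho>" and pos: "positive_op M \<rho>"
begin

lemma rho_L2: "u \<in> L2 M \<Longrightarrow> \<rho> u \<in> L2 M"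
  using bnd by (auto simp: bounded_op_def)

lemma rho_cong: "u \<in> L2 M \<Longrightarrow> v \<in> L2 M \<Longrightarrow> (AE x in M. u x = v x) \<Longrightarrow> AE x in M. \<rho> u x = \<rho> v x"
  using bnd unfolding bounded_op_def by blast

lemma rho_add: "u \<in> L2 M \<Longrightarrow> v \<in> L2 M \<Longrightarrow> AE x in M. \<rho> (\<lambda>y. u y + v y) x = \<rho> u x + \<rho> v x"
  using bnd unfolding bounded_op_def by blast

lemma rho_scale: "u \<in> L2 M \<Longrightarrow> AE x in M. \<rho> (\<lambda>y. c * u y) x = c * \<rho> u x"
  using bnd unfolding bounded_op_def by blast

lemma rho_bound: "\<exists>C. \<forall>u\<in>L2 M. norm_L2 M (\<rho> u) \<le> C * norm_L2 M u"
  using bnd unfolding bounded_op_def by blast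

lemma Q_add_right:
  assumes "a \<in> L2 M" "u \<in> L2 M" "v \<in> L2 M"
  shows "inner_L2 M a (\<rho> (\<lambda>y. u y + v y)) = inner_L2 M a (\<rho> u) + inner_L2 M a (\<rho> v)"
proof -
  have "inner_L2 M a (\<rho> (\<lambda>y. u y + v y)) = inner_L2 M a (\<lambda>x. \<rho> u x + \<rho> v x)"
    using assms by (intro inner_cong_AE rho_add) (auto intro!: L2_meas rho_L2 L2_add)
  also have "\<dots> = inner_L2 M a (\<rho> u) + inner_L2 M a (\<rho> v)"
    using assms by (intro inner_add_right rho_L2)
  finally show ?thesis .
qed

lemma Q_scale_right:
  assumes "a \<in> L2 M" "u \<in> L2 M"
  shows "inner_L2 M a (\<rho> (\<lambda>y. c * u y)) = c * inner_L2 M a (\<rho> u)"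
proof -
  have "inner_L2 M a (\<rho> (\<lambda>y. c * u y)) = inner_L2 M a (\<lambda>x. c * \<rho> u x)"
    using assms by (intro inner_cong_AE rho_scale) (auto intro!: L2_meas rho_L2 L2_scale)
  also have "\<dots> = c * inner_L2 M a (\<rho> u)"
    by (rule inner_scale_right)
  finally show ?thesis .
qed

lemma Q_diag_real: "u \<in> L2 M \<Longrightarrow> Im (inner_L2 M u (\<rho> u)) = 0"
  using pos by (auto simp: positive_op_def)

lemma Q_expand:
  assumes "a \<in> L2 M" "b \<in> L2 M"
  shows "inner_L2 M (\<lambda>x. a x + b x) (\<rho> (\<lambda>x. a x + b x)) =
    inner_L2 M a (\<rho> a) + inner_L2 M a (\<rho> b) + inner_L2 M b (\<rho> a) + inner_L2 M b (\<rho> b)"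
proof -
  have ab: "(\<lambda>x. a x + b x) \<in> L2 M" using assms by (rule L2_add)
  have "inner_L2 M (\<lambda>x. a x + b x) (\<rho> (\<lambda>x. a x + b x)) =
      inner_L2 M (\<lambda>x. a x + b x) (\<rho> a) + inner_L2 M (\<lambda>x. a x + b x) (\<rho> b)"
    by (rule Q_add_right[OF ab assms])
  also have "\<dots> = inner_L2 M a (\<rho> a) + inner_L2 M b (\<rho> a) + (inner_L2 M a (\<rho> b) + inner_L2 M b (\<rho> b))"
    using assms by (simp add: inner_add_left rho_L2)
  finally show ?thesis by simp
qed

lemma selfadj:
  assumes u: "u \<in> L2 M" and v: "v \<in> L2 M"
  shows "inner_L2 M u (\<rho> v) = inner_L2 M (\<rho> u) v"
proof -
  define s where "s = inner_L2 M u (\<rho> v)"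
  define t where "t = inner_L2 M v (\<rho> u)"
  have iv: "(\<lambda>x. \<i> * v x) \<in> L2 M" using v by (rule L2_scale)
  have 1: "Im (s + t) = 0"
  proof -
    have "Im (inner_L2 M (\<lambda>x. u x + v x) (\<rho> (\<lambda>x. u x + v x))) = 0"
      by (rule Q_diag_real) (use u v in \<open>rule L2_add\<close>)
    then show ?thesis using Q_expand[OF u v] Q_diag_real[OF u] Q_diag_real[OF v]
      by (simp add: s_def t_def)
  qed
  have 2: "Re (s - t) = 0"
  proof -
    have "Im (inner_L2 M (\<lambda>x. u x + \<i> * v x) (\<rho> (\<lambda>x. u x + \<i> * v x))) = 0"
      by (rule Q_diag_real) (use u iv in \<open>rule L2_add\<close>)
    moreover have "inner_L2 M u (\<rho> (\<lambda>x. \<i> * v x)) = \<i> * s"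
      using Q_scale_right[OF u v] by (simp add: s_def)
    moreover have "inner_L2 M (\<lambda>x. \<i> * v x) (\<rho> u) = - \<i> * t"
      by (simp add: inner_scale_left t_def)
    moreover have "inner_L2 M (\<lambda>x. \<i> * v x) (\<rho> (\<lambda>x. \<i> * v x)) = inner_L2 M v (\<rho> v)"
      using Q_scale_right[OF v v, of \<i>] by (simp add: inner_scale_left)
    ultimately show ?thesis using Q_expand[OF u iv] Q_diag_real[OF u] Q_diag_real[OF v]
      by simp
  qed
  have "t = cnj s" using 1 2 by (simp add: complex_eq_iff)
  then show ?thesis
    by (metis complex_cnj_cnj inner_cnj s_def t_def)
qed

end

definition orthonormal :: "'a measure \<Rightarrow> ('a \<Rightarrow> complex) set \<Rightarrow> bool" where
  "orthonormal M B \<longleftrightarrow> B \<subseteq> L2 M \<and> (\<forall>e\<in>B. inner_L2 M e e = 1) \<and>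
     (\<forall>e\<in>B. \<forall>e'\<in>B. e \<noteq> e' \<longrightarrow> inner_L2 M e e' = 0)"

lemma onb_orth: "onb M B \<Longrightarrow> orthonormal M B"
  unfolding onb_def orthonormal_def by (elim conjE, intro conjI; assumption)

lemma orthD1: "orthonormal M B \<Longrightarrow> e \<in> B \<Longrightarrow> e \<in> L2 M"
  unfolding orthonormal_def by (elim conjE) (erule subsetD)

lemma orthD2: "orthonormal M B \<Longrightarrow> e \<in> B \<Longrightarrow> inner_L2 M e e = 1"
  unfolding orthonormal_def by (elim conjE) (erule bspec)

lemma orthD3: "orthonormal M B \<Longrightarrow> e \<in> B \<Longrightarrow> e' \<in> B \<Longrightarrow> e \<noteq> e' \<Longrightarrow> inner_L2 M e e' = 0"
  unfolding orthonormal_def by (elim conjE) (drule bspec, assumption, drule bspec, assumption, erule mp)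

lemma orthI:
  assumes "\<And>e. e \<in> B \<Longrightarrow> e \<in> L2 M" "\<And>e. e \<in> B \<Longrightarrow> inner_L2 M e e = 1"
    "\<And>e e'. e \<in> B \<Longrightarrow> e' \<in> B \<Longrightarrow> e \<noteq> e' \<Longrightarrow> inner_L2 M e e' = 0"
  shows "orthonormal M B"
  unfolding orthonormal_def using assms by (intro conjI subsetI ballI impI)

lemma orthonormal_subset: "orthonormal M B \<Longrightarrow> F \<subseteq> B \<Longrightarrow> orthonormal M F"
  by (rule orthI) (auto dest: orthD1 orthD2 orthD3)

context prob_space
begin

lemma bessel_finite:
  assumes orth: "orthonormal M F" and fin: "finite F" and u: "u \<in> L2 M"
  shows "(\<Sum>e\<in>F. (cmod (inner_L2 M e u))\<^sup>2) \<le> (LINT x|M. (cmod (u x))\<^sup>2)"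
proof -
  define c where "c e = inner_L2 M e u" for e
  define S where "S = (\<lambda>x. \<Sum>e\<in>F. c e * e x)"
  have FL2: "e \<in> L2 M" if "e \<in> F" for e using orth that by (rule orthD1)
  have cL2: "(\<lambda>x. c e * e x) \<in> L2 M" if "e \<in> F" for e using FL2[OF that] by (rule L2_scale)
  have SL2: "S \<in> L2 M" unfolding S_def using fin cL2 by (rule L2_sum)
  define N where "N = (\<Sum>e\<in>F. complex_of_real ((cmod (c e))\<^sup>2))"
  have cc: "c e * cnj (c e) = complex_of_real ((cmod (c e))\<^sup>2)" for e
    by (rule complex_norm_square[symmetric])
  have Su: "inner_L2 M S u = N"
  proof -
    have "inner_L2 M S u = (\<Sum>e\<in>F. inner_L2 M (\<lambda>x. c e * e x) u)"
      unfolding S_def by (rule inner_sum_left[OF fin u cL2])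
    also have "\<dots> = (\<Sum>e\<in>F. cnj (c e) * c e)"
      by (simp add: inner_scale_left c_def)
    also have "\<dots> = N" unfolding N_def by (simp add: cc mult.commute)
    finally show ?thesis .
  qed
  have uS: "inner_L2 M u S = N"
  proof -
    have "inner_L2 M u S = cnj (inner_L2 M S u)" by (simp add: inner_cnj)
    also have "\<dots> = N" using Su by (simp add: N_def)
    finally show ?thesis .
  qed
  have eS: "inner_L2 M e S = c e" if e: "e \<in> F" for e
  proof -
    have "inner_L2 M e S = (\<Sum>e'\<in>F. inner_L2 M e (\<lambda>x. c e' * e' x))"
      unfolding S_def by (rule inner_sum_right[OF fin FL2[OF e] cL2])
    also have "\<dots> = (\<Sum>e'\<in>F. if e' = e then c e else 0)"
    proof (rule sum.cong[OF refl])
      fix e' assume "e' \<in> F"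
      then show "inner_L2 M e (\<lambda>x. c e' * e' x) = (if e' = e then c e else 0)"
        using orthD2[OF orth e] orthD3[OF orth e \<open>e' \<in> F\<close>] by (auto simp: inner_scale_right)
    qed
    also have "\<dots> = c e" using fin e by simp
    finally show ?thesis .
  qed
  have SS: "inner_L2 M S S = N"
  proof -
    have "inner_L2 M S S = (\<Sum>e\<in>F. inner_L2 M (\<lambda>x. c e * e x) S)"
      by (subst (1) S_def, rule inner_sum_left[OF fin SL2 cL2])
    also have "\<dots> = (\<Sum>e\<in>F. cnj (c e) * c e)"
      by (rule sum.cong[OF refl]) (simp add: inner_scale_left eS)
    also have "\<dots> = N" unfolding N_def by (simp add: cc mult.commute)
    finally show ?thesis .
  qed
  define w where "w = (\<lambda>x. u x - S x)"
  have "inner_L2 M w w = inner_L2 M u u - inner_L2 M S u - (inner_L2 M u S - inner_L2 M S S)"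
    unfolding w_def using u SL2 L2_diff[OF u SL2]
    by (simp add: inner_diff_left inner_diff_right)
  also have "\<dots> = inner_L2 M u u - N" using Su uS SS by simp
  finally have "complex_of_real (LINT x|M. (cmod (w x))\<^sup>2) = complex_of_real (LINT x|M. (cmod (u x))\<^sup>2) - N"
    by (simp add: inner_self)
  moreover have "N = complex_of_real (\<Sum>e\<in>F. (cmod (c e))\<^sup>2)" by (simp add: N_def)
  ultimately have "(LINT x|M. (cmod (w x))\<^sup>2) = (LINT x|M. (cmod (u x))\<^sup>2) - (\<Sum>e\<in>F. (cmod (c e))\<^sup>2)"
    by (metis of_real_diff of_real_eq_iff)
  moreover have "0 \<le> (LINT x|M. (cmod (w x))\<^sup>2)" by (rule inner_self_nonneg)
  ultimately show ?thesis by (simp add: c_def)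
qed

lemma bessel_summable:
  assumes orth: "orthonormal M B" and u: "u \<in> L2 M"
  shows "(\<lambda>e. (cmod (inner_L2 M e u))\<^sup>2) summable_on B"
    and "infsum (\<lambda>e. (cmod (inner_L2 M e u))\<^sup>2) B \<le> (LINT x|M. (cmod (u x))\<^sup>2)"
proof -
  have fin: "(\<Sum>e\<in>F. (cmod (inner_L2 M e u))\<^sup>2) \<le> (LINT x|M. (cmod (u x))\<^sup>2)" if "finite F" "F \<subseteq> B" for F
    using bessel_finite[OF orthonormal_subset[OF orth that(2)] that(1) u] .
  show sm: "(\<lambda>e. (cmod (inner_L2 M e u))\<^sup>2) summable_on B"
    by (rule nonneg_bdd_above_summable_on) (use fin in \<open>auto simp: bdd_above_def\<close>)
  show "infsum (\<lambda>e. (cmod (inner_L2 M e u))\<^sup>2) B \<le> (LINT x|M. (cmod (u x))\<^sup>2)"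
    by (rule infsum_le_finite_sums[OF sm fin])
qed

lemma bessel_countable:
  assumes orth: "orthonormal M B" and u: "u \<in> L2 M"
  shows "countable {e\<in>B. inner_L2 M e u \<noteq> 0}"
proof -
  have "countable {e\<in>B. (cmod (inner_L2 M e u))\<^sup>2 \<noteq> 0}"
    by (rule summable_countable_real[OF bessel_summable(1)[OF orth u]])
  then show ?thesis by simp
qed

lemma onb_exists: "\<exists>B. onb M B"
proof -
  define A where "A = {B. orthonormal M B}"
  have "\<forall>C\<in>chains A. \<Union>C \<in> A"
  proof
    fix C assume C: "C \<in> chains A"
    have sub: "C \<subseteq> A" using C by (rule chainsD2)
    have subo: "orthonormal M X" if "X \<in> C" for X using sub that by (auto simp: A_def)
    show "\<Union>C \<in> A"
      unfolding A_def mem_Collect_eq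
    proof (rule orthI)
      show "e \<in> L2 M" if "e \<in> \<Union>C" for e using that subo orthD1 by blast
      show "inner_L2 M e e = 1" if "e \<in> \<Union>C" for e using that subo orthD2 by blast
      fix e e' assume e: "e \<in> \<Union>C" and e': "e' \<in> \<Union>C" and ne: "e \<noteq> e'"
      from e obtain X where X: "X \<in> C" "e \<in> X" by blast
      from e' obtain Y where Y: "Y \<in> C" "e' \<in> Y" by blast
      from chainsD[OF C X(1) Y(1)] have "X \<subseteq> Y \<or> Y \<subseteq> X" .
      then obtain Z where "Z \<in> C" "e \<in> Z" "e' \<in> Z" using X Y by blast
      then show "inner_L2 M e e' = 0" using subo ne orthD3 by blast
    qed
  qed
  from Zorn_Lemma[OF this] obtain B where B: "B \<in> A" and max: "\<And>X. X \<in> A \<Longrightarrow> B \<subseteq> X \<Longrightarrow> X = B"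
    by blast
  have orth: "orthonormal M B" using B by (simp add: A_def)
  have "norm_L2 M u = 0" if u: "u \<in> L2 M" and perp: "\<forall>e\<in>B. inner_L2 M e u = 0" for u
  proof (rule ccontr)
    assume nz: "norm_L2 M u \<noteq> 0"
    define n where "n = norm_L2 M u"
    define s where "s = (LINT x|M. (cmod (u x))\<^sup>2)"
    have s0: "0 \<le> s" unfolding s_def by (rule inner_self_nonneg)
    have n: "n = sqrt s" by (simp add: n_def s_def norm_L2_def)
    have npos: "n > 0" using nz s0 by (simp add: n_def[symmetric] n)
    have nn: "n * n = s" using s0 by (simp add: n)
    define e0 where "e0 = (\<lambda>x. complex_of_real (1/n) * u x)"
    have e0L2: "e0 \<in> L2 M" unfolding e0_def using u by (rule L2_scale)
    have e0e0: "inner_L2 M e0 e0 = 1"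
    proof -
      have "inner_L2 M e0 e0 = complex_of_real (1/n) * complex_of_real (1/n) * inner_L2 M u u"
        unfolding e0_def by (simp only: inner_scale_left inner_scale_right complex_cnj_complex_of_real mult.assoc)
      also have "\<dots> = complex_of_real (1/(n*n) * s)" by (simp add: inner_self s_def)
      also have "\<dots> = 1" using nn npos by (simp flip: nn)
      finally show ?thesis .
    qed
    have ee0: "inner_L2 M e e0 = 0" if "e \<in> B" for e
      unfolding e0_def inner_scale_right using perp that by simp
    have e0e: "inner_L2 M e0 e = 0" if "e \<in> B" for e
      using ee0[OF that] inner_cnj[of e e0] by simp
    have notin: "e0 \<notin> B"
    proof
      assume "e0 \<in> B"
      then have "inner_L2 M e0 u = 0" using perp by simp
      moreover have "inner_L2 M e0 e0 = complex_of_real (1/n) * inner_L2 M e0 u"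
        unfolding e0_def by (rule inner_scale_right)
      ultimately have "inner_L2 M e0 e0 = 0" by simp
      then show False using e0e0 by simp
    qed
    have "orthonormal M (insert e0 B)"
    proof (rule orthI)
      show "e \<in> L2 M" if "e \<in> insert e0 B" for e using that e0L2 orthD1[OF orth] by blast
      show "inner_L2 M e e = 1" if "e \<in> insert e0 B" for e using that e0e0 orthD2[OF orth] by blast
      show "inner_L2 M e e' = 0" if "e \<in> insert e0 B" "e' \<in> insert e0 B" "e \<noteq> e'" for e e'
        using that ee0 e0e orthD3[OF orth] by blast
    qed
    then have "insert e0 B \<in> A" by (simp add: A_def)
    from max[OF this] notin show False by auto
  qed
  then have c: "\<forall>u\<in>L2 M. (\<forall>e\<in>B. inner_L2 M e u = 0) \<longrightarrow> norm_L2 M u = 0" by blast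
  have "onb M B" unfolding onb_def
  proof (intro conjI)
    show "B \<subseteq> L2 M" using orthD1[OF orth] by blast
    show "\<forall>e\<in>B. inner_L2 M e e = 1" using orthD2[OF orth] by blast
    show "\<forall>e\<in>B. \<forall>e'\<in>B. e \<noteq> e' \<longrightarrow> inner_L2 M e e' = 0" using orthD3[OF orth] by blast
  qed (rule c)
  then show ?thesis by blast
qed

lemma onb_some: "onb M (SOME B. onb M B)"
  using onb_exists by (rule someI_ex)

end

lemma ind_Ico_integrable: fixes m :: real shows "integrable lborel (\<lambda>l. indicator {0..<m} l :: real)"
proof (cases "0 \<le> m")
  case True
  have "{0..<m} \<in> sets lborel" by simp
  moreover have "emeasure lborel {0..<m} < \<top>" using True by simp
  ultimately show ?thesis by (intro integrable_real_indicator) (auto simp: less_top[symmetric])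
next
  case False
  then have "{0..<m} = ({}::real set)" by auto
  then show ?thesis by simp
qed

lemma ind_Ico_integral: fixes m :: real shows "(LINT l|lborel. indicator {0..<m} l :: real) = max 0 m"
proof (cases "0 \<le> m")
  case True
  then show ?thesis by simp
next
  case False
  then have "{0..<m} = ({}::real set)" by auto
  then show ?thesis using False by simp
qed

lemma ind_Ico_integrable_c: fixes m :: real shows "integrable lborel (\<lambda>l. complex_of_real (indicator {0..<m} l) * c)"
  using ind_Ico_integrable[of m] by (intro integrable_mult_left integrable_of_real)

lemma ind_Ico_integral_c: fixes m :: real shows "(LINT l|lborel. complex_of_real (indicator {0..<m} l) * c) = complex_of_real (max 0 m) * c"
  by (simp only: integral_mult_left_zero integral_complex_of_real ind_Ico_integral)

lemma Ico_inter: fixes l :: real shows "indicator {0..<a} l * (if l < b then 1 else 0) = (indicator {0..<min a b} l :: real)"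
  by (auto simp: indicator_def min_less_iff_conj)

lemma norm_integral_le:
  fixes f :: "'a \<Rightarrow> 'b::{banach,second_countable_topology}"
  assumes "integrable M g" "f \<in> borel_measurable M" "\<And>x. x \<in> space M \<Longrightarrow> norm (f x) \<le> g x"
  shows "norm (integral\<^sup>L M f) \<le> integral\<^sup>L M g"
proof -
  have fi: "integrable M (\<lambda>x. norm (f x))"
    by (rule Bochner_Integration.integrable_bound[OF assms(1)]) (use assms(2,3) in \<open>auto intro: order_trans[OF _ abs_ge_self]\<close>)
  have "norm (integral\<^sup>L M f) \<le> (LINT x|M. norm (f x))" by (rule integral_norm_bound)
  also have "\<dots> \<le> integral\<^sup>L M g" using fi assms(1,3) by (intro integral_mono) auto
  finally show ?thesis .
qed

locale hyp = prob_space +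
  fixes h :: "'a \<Rightarrow> real"
  assumes hm[measurable]: "h \<in> borel_measurable M" and hi: "integrable M (\<lambda>x. (h x)\<^sup>2)"
begin

definition pp :: "'a \<Rightarrow> real" where "pp x = max (h x) 0"

lemma pp_meas[measurable]: "pp \<in> borel_measurable M"
  unfolding pp_def by measurable

lemma pp_L2: "(\<lambda>x. complex_of_real (pp x)) \<in> L2 M"
proof (rule L2_real)
  show "pp \<in> borel_measurable M" by (rule pp_meas)
  show "integrable M (\<lambda>x. (pp x)\<^sup>2)"
  proof (rule Bochner_Integration.integrable_bound[OF hi])
    show "(\<lambda>x. (pp x)\<^sup>2) \<in> borel_measurable M" by measurable
    show "AE x in M. norm ((pp x)\<^sup>2) \<le> norm ((h x)\<^sup>2)"
      by (auto simp: pp_def max_def abs_le_square_iff)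
  qed
qed

lemma pp_nonneg: "0 \<le> pp x" by (simp add: pp_def)

lemma pp_int_mult:
  assumes "w \<in> L2 M" shows "integrable M (\<lambda>y. cmod (w y) * pp y)"
  using L2_prod_integrable[OF assms pp_L2] by (simp add: abs_of_nonneg pp_nonneg)

lemma PS: "pair_sigma_finite M lborel"
  by (simp add: pair_sigma_finite_def sigma_finite_measure_axioms sigma_finite_lborel)

lemma per_e:
  assumes e: "e \<in> L2 M" and w: "w \<in> L2 M"
  defines "\<alpha> \<equiv> \<lambda>l. LINT x|M. complex_of_real (if l < h x then 1 else 0) * e x"
  defines "\<beta> \<equiv> \<lambda>l. LINT y|M. cnj (w y) * complex_of_real (if l < h y then 1 else 0)"
  shows "integrable lborel (\<lambda>l. complex_of_real (indicator {0..} l) * (\<alpha> l * \<beta> l))"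
    and "(LINT l|lborel. complex_of_real (indicator {0..} l) * (\<alpha> l * \<beta> l)) = inner_L2 M w (quant_pos M pp e)"
proof -
  interpret P: pair_sigma_finite M lborel by (rule PS)
  have em[measurable]: "e \<in> borel_measurable M" using e by (rule L2_meas)
  have wm[measurable]: "w \<in> borel_measurable M" using w by (rule L2_meas)
  define E1 where "E1 = (LINT x|M. cmod (e x))"
  have e1: "integrable M (\<lambda>x. cmod (e x))" using e by (rule L2_norm_integrable)
  have E1_nonneg: "0 \<le> E1" unfolding E1_def by (rule integral_nonneg_AE) auto
  have \<alpha>m[measurable]: "\<alpha> \<in> borel_measurable borel"
    unfolding \<alpha>_def by measurable
  have \<alpha>m'[measurable]: "\<alpha> \<in> borel_measurable lborel"
    using \<alpha>m by simp
  have \<alpha>b: "cmod (\<alpha> l) \<le> E1" for l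
    unfolding \<alpha>_def E1_def
    by (rule norm_integral_le[OF e1]) (auto simp: norm_mult)
  define G where "G = (\<lambda>y l. cnj (w y) * complex_of_real (indicator {0..<h y} l) * \<alpha> l)"
  have Gm[measurable]: "(\<lambda>(y, l). G y l) \<in> borel_measurable (M \<Otimes>\<^sub>M lborel)"
    unfolding G_def by (simp only: indicator_def atLeastLessThan_iff) measurable
  have Gsec: "integrable lborel (\<lambda>l. G y l)" for y
  proof (rule Bochner_Integration.integrable_bound[OF ind_Ico_integrable_c[of "h y" "complex_of_real (cmod (w y) * E1)"]])
    show "(\<lambda>l. G y l) \<in> borel_measurable lborel" unfolding G_def by measurable
    show "AE l in lborel. norm (G y l) \<le> norm (complex_of_real (indicator {0..<h y} l) * complex_of_real (cmod (w y) * E1))"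
      using \<alpha>b E1_nonneg by (auto simp: G_def norm_mult indicator_def intro!: mult_left_mono)
  qed
  have Gnorm_int: "(LINT l|lborel. norm (G y l)) \<le> cmod (w y) * pp y * E1" for y
  proof -
    have "(LINT l|lborel. norm (G y l)) \<le> (LINT l|lborel. indicator {0..<h y} l * (cmod (w y) * E1))"
    proof (rule integral_mono)
      show "integrable lborel (\<lambda>l. norm (G y l))" using Gsec by (rule integrable_norm)
      show "integrable lborel (\<lambda>l. indicator {0..<h y} l * (cmod (w y) * E1))"
        using ind_Ico_integrable by (rule integrable_mult_left)
      show "norm (G y l) \<le> indicator {0..<h y} l * (cmod (w y) * E1)" for l
        using \<alpha>b E1_nonneg by (auto simp: G_def norm_mult indicator_def intro!: mult_left_mono)
    qed
    also have "\<dots> = cmod (w y) * pp y * E1"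
      by (simp only: integral_mult_left_zero ind_Ico_integral) (simp add: pp_def max.commute)
    finally show ?thesis .
  qed
  have Gint: "integrable (M \<Otimes>\<^sub>M lborel) (\<lambda>(y, l). G y l)"
  proof (rule P.Fubini_integrable)
    show "(\<lambda>(y, l). G y l) \<in> borel_measurable (M \<Otimes>\<^sub>M lborel)" by (rule Gm)
    show "AE y in M. integrable lborel (\<lambda>l. case (y, l) of (y, l) \<Rightarrow> G y l)" using Gsec by simp
    show "integrable M (\<lambda>y. LINT l|lborel. norm (case (y, l) of (y, l) \<Rightarrow> G y l))"
    proof (rule Bochner_Integration.integrable_bound[OF integrable_mult_left[OF pp_int_mult[OF w], of E1]])
      show "(\<lambda>y. LINT l|lborel. norm (case (y, l) of (y, l) \<Rightarrow> G y l)) \<in> borel_measurable M"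
        by simp measurable
      show "AE y in M. norm (LINT l|lborel. norm (case (y, l) of (y, l) \<Rightarrow> G y l)) \<le> norm (cmod (w y) * pp y * E1)"
      proof (rule AE_I2)
        fix y
        have "0 \<le> (LINT l|lborel. norm (G y l))" by (rule integral_nonneg_AE) auto
        then show "norm (LINT l|lborel. norm (case (y, l) of (y, l) \<Rightarrow> G y l)) \<le> norm (cmod (w y) * pp y * E1)"
          using Gnorm_int[of y] by simp
      qed
    qed
  qed
  have rep: "complex_of_real (indicator {0..} l) * (\<alpha> l * \<beta> l) = (LINT y|M. G y l)" for l
  proof -
    have "complex_of_real (indicator {0..} l) * (\<alpha> l * \<beta> l)
        = (LINT y|M. complex_of_real (indicator {0..} l) * \<alpha> l * (cnj (w y) * complex_of_real (if l < h y then 1 else 0)))"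
      unfolding \<beta>_def by (simp only: integral_mult_right_zero mult.assoc)
    also have "\<dots> = (LINT y|M. G y l)"
      by (rule Bochner_Integration.integral_cong[OF refl]) (auto simp: G_def indicator_def)
    finally show ?thesis .
  qed
  have inner: "(LINT l|lborel. G y l) = cnj (w y) * quant_pos M pp e y" for y
  proof -
    define K where "K = (\<lambda>x l. complex_of_real (indicator {0..<h y} l * (if l < h x then 1 else 0)) * e x)"
    have Km[measurable]: "(\<lambda>(x, l). K x l) \<in> borel_measurable (M \<Otimes>\<^sub>M lborel)"
      unfolding K_def by (simp only: indicator_def atLeastLessThan_iff) measurable
    have Kalt: "K x l = complex_of_real (indicator {0..<min (h y) (h x)} l) * e x" for x l
      unfolding K_def by (simp only: Ico_inter)
    have Kl: "(LINT l|lborel. K x l) = complex_of_real (min (pp x) (pp y)) * e x" for x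
    proof -
      have "max 0 (min (h y) (h x)) = min (pp x) (pp y)" by (auto simp: pp_def)
      then show ?thesis unfolding Kalt ind_Ico_integral_c by simp
    qed
    have Klnorm: "(LINT l|lborel. norm (K x l)) = min (pp x) (pp y) * cmod (e x)" for x
    proof -
      have "(LINT l|lborel. norm (K x l)) = (LINT l|lborel. indicator {0..<min (h y) (h x)} l * cmod (e x))"
        unfolding Kalt by (rule Bochner_Integration.integral_cong[OF refl]) (simp add: norm_mult)
      also have "\<dots> = max 0 (min (h y) (h x)) * cmod (e x)"
        by (simp only: integral_mult_left_zero ind_Ico_integral)
      also have "max 0 (min (h y) (h x)) = min (pp x) (pp y)" by (auto simp: pp_def)
      finally show ?thesis .
    qed
    have Kint: "integrable (M \<Otimes>\<^sub>M lborel) (\<lambda>(x, l). K x l)"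
    proof (rule P.Fubini_integrable)
      show "(\<lambda>(x, l). K x l) \<in> borel_measurable (M \<Otimes>\<^sub>M lborel)" by (rule Km)
      show "AE x in M. integrable lborel (\<lambda>l. case (x, l) of (x, l) \<Rightarrow> K x l)"
        unfolding Kalt by (simp add: ind_Ico_integrable_c)
      show "integrable M (\<lambda>x. LINT l|lborel. norm (case (x, l) of (x, l) \<Rightarrow> K x l))"
        unfolding case_prod_conv Klnorm
      proof (rule Bochner_Integration.integrable_bound[OF integrable_mult_left[OF e1, of "pp y"]])
        show "(\<lambda>x. min (pp x) (pp y) * cmod (e x)) \<in> borel_measurable M" by measurable
        show "AE x in M. norm (min (pp x) (pp y) * cmod (e x)) \<le> norm (cmod (e x) * pp y)"
        proof (rule AE_I2)
          fix x
          have "min (pp x) (pp y) * cmod (e x) \<le> pp y * cmod (e x)"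
            by (intro mult_right_mono) auto
          then show "norm (min (pp x) (pp y) * cmod (e x)) \<le> norm (cmod (e x) * pp y)"
            using pp_nonneg[of x] pp_nonneg[of y] by (simp add: abs_mult mult.commute)
        qed
      qed
    qed
    have "(LINT l|lborel. G y l) = cnj (w y) * (LINT l|lborel. complex_of_real (indicator {0..<h y} l) * \<alpha> l)"
      unfolding G_def by (simp only: integral_mult_right_zero mult.assoc)
    also have "(LINT l|lborel. complex_of_real (indicator {0..<h y} l) * \<alpha> l) = (LINT l|lborel. LINT x|M. K x l)"
    proof (rule Bochner_Integration.integral_cong[OF refl])
      fix l
      show "complex_of_real (indicator {0..<h y} l) * \<alpha> l = (LINT x|M. K x l)"
        unfolding \<alpha>_def K_def by (simp only: integral_mult_right_zero mult.assoc of_real_mult)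
    qed
    also have "\<dots> = (LINT x|M. LINT l|lborel. K x l)"
      using Kint by (rule P.Fubini_integral)
    also have "\<dots> = quant_pos M pp e y"
      unfolding Kl quant_pos_def by simp
    finally show ?thesis .
  qed
  show int1: "integrable lborel (\<lambda>l. complex_of_real (indicator {0..} l) * (\<alpha> l * \<beta> l))"
    unfolding rep using Gint by (rule P.integrable_snd)
  have "(LINT l|lborel. complex_of_real (indicator {0..} l) * (\<alpha> l * \<beta> l)) = (LINT l|lborel. LINT y|M. G y l)"
    unfolding rep ..
  also have "\<dots> = (LINT y|M. LINT l|lborel. G y l)"
    using Gint by (rule P.Fubini_integral)
  also have "\<dots> = inner_L2 M w (quant_pos M pp e)"
    unfolding inner inner_L2_def ..
  finally show "(LINT l|lborel. complex_of_real (indicator {0..} l) * (\<alpha> l * \<beta> l)) = inner_L2 M w (quant_pos M pp e)" .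
qed

end

context hyp
begin

lemma A_sets: "{x\<in>space M. l < h x} \<in> sets M"
  by measurable

lemma meas_int: "integrable lborel (\<lambda>l. indicator {0..} l * measure M {x\<in>space M. l < h x})"
proof -
  interpret P: pair_sigma_finite M lborel by (rule PS)
  define R where "R = (\<lambda>x l. indicator {0..<h x} l :: real)"
  have Rm: "(\<lambda>(x, l). R x l) \<in> borel_measurable (M \<Otimes>\<^sub>M lborel)"
    unfolding R_def by (simp only: indicator_def atLeastLessThan_iff) measurable
  have ppi: "integrable M pp"
    using pp_int_mult[OF L2_const[of 1]] by simp
  have Rint: "integrable (M \<Otimes>\<^sub>M lborel) (\<lambda>(x, l). R x l)"
  proof (rule P.Fubini_integrable[OF Rm])
    show "AE x in M. integrable lborel (\<lambda>l. case (x, l) of (x, l) \<Rightarrow> R x l)"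
      by (simp add: R_def ind_Ico_integrable)
    have "(LINT l|lborel. norm (R x l)) = pp x" for x
      by (simp only: R_def real_norm_def abs_indicator ind_Ico_integral) (simp add: pp_def max.commute)
    then show "integrable M (\<lambda>x. LINT l|lborel. norm (case (x, l) of (x, l) \<Rightarrow> R x l))"
      using ppi by simp
  qed
  have "integrable lborel (\<lambda>l. LINT x|M. R x l)"
    using Rint by (rule P.integrable_snd)
  moreover have "(LINT x|M. R x l) = indicator {0..} l * measure M {x\<in>space M. l < h x}" for l
  proof (cases "0 \<le> l")
    case True
    have "(LINT x|M. R x l) = (LINT x|M. indicator {x\<in>space M. l < h x} x)"
      by (rule Bochner_Integration.integral_cong[OF refl]) (use True in \<open>auto simp: R_def indicator_def\<close>)
    also have "\<dots> = measure M {x\<in>space M. l < h x}"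
      by (simp add: integral_indicator)
    finally show ?thesis using True by simp
  next
    case False
    have "(LINT x|M. R x l) = (LINT x|M. 0::real)"
      by (rule Bochner_Integration.integral_cong[OF refl]) (use False in \<open>auto simp: R_def indicator_def\<close>)
    then show ?thesis using False by simp
  qed
  ultimately show ?thesis by simp
qed

lemma qp_L2:
  assumes e: "e \<in> L2 M"
  shows "quant_pos M pp e \<in> L2 M"
proof -
  have em[measurable]: "e \<in> borel_measurable M" using e by (rule L2_meas)
  define E1 where "E1 = (LINT x|M. cmod (e x))"
  have e1: "integrable M (\<lambda>x. cmod (e x))" using e by (rule L2_norm_integrable)
  have meas: "quant_pos M pp e \<in> borel_measurable M"
    unfolding quant_pos_def by measurable
  have bnd: "cmod (quant_pos M pp e y) \<le> E1 * pp y" for y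
  proof -
    have "cmod (quant_pos M pp e y) \<le> (LINT x|M. pp y * cmod (e x))"
      unfolding quant_pos_def
    proof (rule norm_integral_le)
      show "integrable M (\<lambda>x. pp y * cmod (e x))" using e1 by (rule integrable_mult_right)
      show "(\<lambda>x. complex_of_real (min (pp x) (pp y)) * e x) \<in> borel_measurable M" by measurable
      fix x
      have "\<bar>min (pp x) (pp y)\<bar> \<le> pp y" using pp_nonneg[of x] pp_nonneg[of y] by simp
      then show "cmod (complex_of_real (min (pp x) (pp y)) * e x) \<le> pp y * cmod (e x)"
        by (simp add: norm_mult mult_right_mono)
    qed
    also have "\<dots> = E1 * pp y" by (simp add: E1_def mult.commute)
    finally show ?thesis .
  qed
  have "integrable M (\<lambda>y. (cmod (quant_pos M pp e y))\<^sup>2)"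
  proof (rule Bochner_Integration.integrable_bound)
    show "integrable M (\<lambda>y. E1\<^sup>2 * (pp y)\<^sup>2)"
      using L2_sq[OF pp_L2] by (intro integrable_mult_right) simp
    show "(\<lambda>y. (cmod (quant_pos M pp e y))\<^sup>2) \<in> borel_measurable M" using meas by measurable
    show "AE y in M. norm ((cmod (quant_pos M pp e y))\<^sup>2) \<le> norm (E1\<^sup>2 * (pp y)\<^sup>2)"
    proof (rule AE_I2)
      fix y
      have "(cmod (quant_pos M pp e y))\<^sup>2 \<le> (E1 * pp y)\<^sup>2"
        using bnd[of y] by (intro power_mono) auto
      then show "norm ((cmod (quant_pos M pp e y))\<^sup>2) \<le> norm (E1\<^sup>2 * (pp y)\<^sup>2)"
        by (simp add: power_mult_distrib)
    qed
  qed
  then show ?thesis using meas by (simp add: L2_def)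
qed

end

locale main = dens M \<rho> + hyp M h for M \<rho> h
begin

definition B0 where "B0 = (SOME B. onb M B)"

lemma B0_orth: "orthonormal M B0"
  unfolding B0_def by (rule onb_orth[OF onb_some])

lemma B0_L2: "e \<in> B0 \<Longrightarrow> e \<in> L2 M"
  by (rule orthD1[OF B0_orth])

definition Aset where "Aset l = {x\<in>space M. l < h x}"

definition aa where "aa l = (\<lambda>x. indicator (Aset l) x :: complex)"

definition \<alpha> where "\<alpha> e l = (LINT x|M. complex_of_real (if l < h x then 1 else 0) * e x)"
definition \<beta> where "\<beta> e l = (LINT y|M. cnj (\<rho> e y) * complex_of_real (if l < h y then 1 else 0))"
definition g where "g e l = \<alpha> e l * \<beta> e l"

lemma Aset_sets: "Aset l \<in> sets M"
  unfolding Aset_def by (rule A_sets)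

lemma aa_L2: "aa l \<in> L2 M"
  unfolding aa_def by (rule L2_indicator[OF Aset_sets])

lemma \<alpha>_inner: "\<alpha> e l = inner_L2 M (aa l) e"
  unfolding \<alpha>_def inner_L2_def aa_def
  by (rule Bochner_Integration.integral_cong[OF refl]) (auto simp: Aset_def indicator_def)

lemma \<beta>_inner: "\<beta> e l = inner_L2 M (\<rho> e) (aa l)"
  unfolding \<beta>_def inner_L2_def aa_def
  by (rule Bochner_Integration.integral_cong[OF refl]) (auto simp: Aset_def indicator_def)

lemma G1:
  assumes e: "e \<in> L2 M"
  shows "inner_L2 M e (\<rho> (mu_op M (Aset l) e)) = g e l"
proof -
  have c: "(LINT x:Aset l|M. e x) = \<alpha> e l"
    unfolding set_lebesgue_integral_def \<alpha>_def
    by (rule Bochner_Integration.integral_cong[OF refl]) (auto simp: Aset_def indicator_def)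
  have mu: "mu_op M (Aset l) e = (\<lambda>y. \<alpha> e l * aa l y)"
    unfolding mu_op_def c aa_def ..
  have "inner_L2 M e (\<rho> (mu_op M (Aset l) e)) = \<alpha> e l * inner_L2 M e (\<rho> (aa l))"
    unfolding mu by (rule Q_scale_right[OF e aa_L2])
  also have "inner_L2 M e (\<rho> (aa l)) = \<beta> e l"
    unfolding \<beta>_inner by (rule selfadj[OF e aa_L2])
  finally show ?thesis by (simp add: g_def)
qed

lemma G2: "mu_rho M \<rho> (Aset l) = infsum (\<lambda>e. g e l) B0"
  unfolding mu_rho_def tr_def B0_def[symmetric]
  by (rule infsum_cong) (rule G1[OF B0_L2])

lemma G3:
  assumes e: "e \<in> L2 M"
  shows "integrable lborel (\<lambda>l. complex_of_real (indicator {0..} l) * g e l)"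
    and "(LINT l|lborel. complex_of_real (indicator {0..} l) * g e l) = inner_L2 M e (\<rho> (quant_pos M pp e))"
proof -
  note P = per_e[OF e rho_L2[OF e]]
  have eq: "(\<lambda>l. complex_of_real (indicator {0..} l) * g e l) =
    (\<lambda>l. complex_of_real (indicator {0..} l) *
      ((LINT x|M. complex_of_real (if l < h x then 1 else 0) * e x) *
       (LINT y|M. cnj (\<rho> e y) * complex_of_real (if l < h y then 1 else 0))))"
    by (simp add: g_def \<alpha>_def \<beta>_def)
  show "integrable lborel (\<lambda>l. complex_of_real (indicator {0..} l) * g e l)"
    unfolding eq by (rule P(1))
  have "(LINT l|lborel. complex_of_real (indicator {0..} l) * g e l) = inner_L2 M (\<rho> e) (quant_pos M pp e)"
    unfolding eq by (rule P(2))
  also have "\<dots> = inner_L2 M e (\<rho> (quant_pos M pp e))"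
    by (rule selfadj[symmetric, OF e qp_L2[OF e]])
  finally show "(LINT l|lborel. complex_of_real (indicator {0..} l) * g e l) = inner_L2 M e (\<rho> (quant_pos M pp e))" .
qed

definition EE where "EE = {e\<in>B0. \<exists>q\<in>\<rat>. \<alpha> e q \<noteq> 0}"

lemma EE_countable: "countable EE"
proof -
  have "EE \<subseteq> (\<Union>q\<in>\<rat>. {e\<in>B0. inner_L2 M e (aa q) \<noteq> 0})"
  proof
    fix e assume "e \<in> EE"
    then obtain q where q: "e \<in> B0" "q \<in> \<rat>" "\<alpha> e q \<noteq> 0" by (auto simp: EE_def)
    have "\<alpha> e q = cnj (inner_L2 M e (aa q))" by (simp add: \<alpha>_inner inner_cnj)
    then have "inner_L2 M e (aa q) \<noteq> 0" using q(3) by auto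
    then show "e \<in> (\<Union>q\<in>\<rat>. {e\<in>B0. inner_L2 M e (aa q) \<noteq> 0})" using q by blast
  qed
  moreover have "countable (\<Union>q\<in>\<rat>. {e\<in>B0. inner_L2 M e (aa q) \<noteq> 0})"
    by (intro countable_UN countable_rat bessel_countable[OF B0_orth aa_L2])
  ultimately show ?thesis by (rule countable_subset)
qed

lemma G5:
  assumes e: "e \<in> B0" and ne: "e \<notin> EE"
  shows "\<alpha> e l = 0"
proof -
  have eL2: "e \<in> L2 M" using e by (rule B0_L2)
  have em[measurable]: "e \<in> borel_measurable M" using eL2 by (rule L2_meas)
  have zero: "\<alpha> e q = 0" if "q \<in> \<rat>" for q using e ne that by (auto simp: EE_def)
  have "\<forall>n. \<exists>r\<in>\<rat>. l < r \<and> r < l + 1 / Suc n"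
  proof
    fix n :: nat
    have "l < l + 1 / Suc n" by simp
    then show "\<exists>r\<in>\<rat>. l < r \<and> r < l + 1 / Suc n" by (rule Rats_dense_in_real)
  qed
  then obtain r where r: "\<And>n. r n \<in> \<rat>" "\<And>n. l < r n" "\<And>n. r n < l + 1 / Suc n"
    by metis
  have rlim: "r \<longlonglongrightarrow> l"
  proof (rule tendsto_sandwich[of "\<lambda>_. l" _ _ "\<lambda>n. l + 1 / Suc n"])
    show "\<forall>\<^sub>F n in sequentially. l \<le> r n" using r(2) by (simp add: less_imp_le)
    show "\<forall>\<^sub>F n in sequentially. r n \<le> l + 1 / Suc n" using r(3) by (simp add: less_imp_le)
    show "(\<lambda>n. l) \<longlonglongrightarrow> l" by simp
    show "(\<lambda>n. l + 1 / real (Suc n)) \<longlonglongrightarrow> l"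
      using tendsto_add[OF tendsto_const[of l] LIMSEQ_inverse_real_of_nat] by (simp add: inverse_eq_divide)
  qed
  define s where "s n x = complex_of_real (if r n < h x then 1 else 0) * e x" for n x
  define f where "f x = complex_of_real (if l < h x then 1 else 0) * e x" for x
  have lim: "(\<lambda>n. integral\<^sup>L M (s n)) \<longlonglongrightarrow> integral\<^sup>L M f"
  proof (rule integral_dominated_convergence[where w="\<lambda>x. cmod (e x)"])
    show "f \<in> borel_measurable M" unfolding f_def by measurable
    show "s n \<in> borel_measurable M" for n unfolding s_def by measurable
    show "integrable M (\<lambda>x. cmod (e x))" using eL2 by (rule L2_norm_integrable)
    show "AE x in M. norm (s n x) \<le> cmod (e x)" for n by (auto simp: s_def norm_mult)
    show "AE x in M. (\<lambda>n. s n x) \<longlonglongrightarrow> f x"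
    proof (rule AE_I2)
      fix x
      show "(\<lambda>n. s n x) \<longlonglongrightarrow> f x"
      proof (cases "l < h x")
        case True
        then have "\<forall>\<^sub>F n in sequentially. r n < h x" using rlim by (rule order_tendstoD(2)[rotated])
        then have "\<forall>\<^sub>F n in sequentially. s n x = f x"
          by eventually_elim (use True in \<open>simp add: s_def f_def\<close>)
        then show ?thesis by (rule tendsto_eventually)
      next
        case False
        then have "s n x = f x" for n using r(2)[of n] by (simp add: s_def f_def)
        then show ?thesis by simp
      qed
    qed
  qed
  moreover have "integral\<^sup>L M (s n) = 0" for n
    using zero[OF r(1)[of n]] by (simp add: s_def[abs_def] \<alpha>_def)
  ultimately have "(\<lambda>n. 0) \<longlonglongrightarrow> integral\<^sup>L M f" by simp
  then have "integral\<^sup>L M f = 0" by (simp add: LIMSEQ_const_iff)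
  then show ?thesis by (simp add: \<alpha>_def f_def[abs_def])
qed

lemma g_zero: "e \<in> B0 \<Longrightarrow> e \<notin> EE \<Longrightarrow> g e l = 0"
  by (simp add: g_def G5)

end

context main
begin

definition Cb where "Cb = (SOME C. \<forall>u\<in>L2 M. norm_L2 M (\<rho> u) \<le> C * norm_L2 M u)"

lemma Cb: "u \<in> L2 M \<Longrightarrow> norm_L2 M (\<rho> u) \<le> Cb * norm_L2 M u"
  using someI_ex[OF rho_bound] unfolding Cb_def by blast

lemma normsq: "(norm_L2 M u)\<^sup>2 = (LINT x|M. (cmod (u x))\<^sup>2)"
  unfolding norm_L2_def using inner_self_nonneg[of u] by simp

lemma rho_sq:
  assumes u: "u \<in> L2 M"
  shows "(LINT x|M. (cmod (\<rho> u x))\<^sup>2) \<le> Cb\<^sup>2 * (LINT x|M. (cmod (u x))\<^sup>2)"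
proof -
  have "0 \<le> norm_L2 M (\<rho> u)" by (simp add: norm_L2_def)
  then have "(norm_L2 M (\<rho> u))\<^sup>2 \<le> (Cb * norm_L2 M u)\<^sup>2"
    using Cb[OF u] by (intro power_mono) auto
  then show ?thesis by (simp add: normsq power_mult_distrib)
qed

lemma aa_sq: "(LINT x|M. (cmod (aa l x))\<^sup>2) = measure M (Aset l)"
proof -
  have "(LINT x|M. (cmod (aa l x))\<^sup>2) = (LINT x|M. indicator (Aset l) x)"
    by (rule Bochner_Integration.integral_cong[OF refl]) (simp add: aa_def indicator_def)
  also have "\<dots> = measure M (Aset l)"
    using sets.sets_into_space[OF Aset_sets[of l]] by (simp add: Int_absorb2)
  finally show ?thesis .
qed

definition KK where "KK = (1 + Cb\<^sup>2) / 2"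

lemma g_bound:
  assumes e: "e \<in> L2 M"
  shows "cmod (g e l) \<le> ((cmod (inner_L2 M e (aa l)))\<^sup>2 + (cmod (inner_L2 M e (\<rho> (aa l))))\<^sup>2) / 2"
proof -
  have 1: "cmod (\<alpha> e l) = cmod (inner_L2 M e (aa l))"
    unfolding \<alpha>_inner by (metis complex_mod_cnj inner_cnj)
  have 2: "cmod (\<beta> e l) = cmod (inner_L2 M e (\<rho> (aa l)))"
    unfolding \<beta>_inner by (simp add: selfadj[OF e aa_L2])
  define x where "x = cmod (inner_L2 M e (aa l))"
  define y where "y = cmod (inner_L2 M e (\<rho> (aa l)))"
  have "0 \<le> (x - y)\<^sup>2" by simp
  then have "x * y \<le> (x\<^sup>2 + y\<^sup>2) / 2" by (simp add: power2_diff)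
  then show ?thesis unfolding g_def norm_mult 1 2 x_def y_def .
qed

lemma gsum:
  assumes F: "finite F" "F \<subseteq> B0"
  shows "(\<Sum>e\<in>F. cmod (g e l)) \<le> KK * measure M (Aset l)"
proof -
  have orthF: "orthonormal M F" using B0_orth F(2) by (rule orthonormal_subset)
  have "(\<Sum>e\<in>F. cmod (g e l)) \<le> (\<Sum>e\<in>F. ((cmod (inner_L2 M e (aa l)))\<^sup>2 + (cmod (inner_L2 M e (\<rho> (aa l))))\<^sup>2) / 2)"
  proof (rule sum_mono)
    fix e assume "e \<in> F"
    then have "e \<in> L2 M" using F(2) B0_L2 by blast
    then show "cmod (g e l) \<le> ((cmod (inner_L2 M e (aa l)))\<^sup>2 + (cmod (inner_L2 M e (\<rho> (aa l))))\<^sup>2) / 2"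
      by (rule g_bound)
  qed
  also have "\<dots> = ((\<Sum>e\<in>F. (cmod (inner_L2 M e (aa l)))\<^sup>2) + (\<Sum>e\<in>F. (cmod (inner_L2 M e (\<rho> (aa l))))\<^sup>2)) / 2"
    by (simp only: sum_divide_distrib[symmetric] sum.distrib)
  also have "\<dots> \<le> ((LINT x|M. (cmod (aa l x))\<^sup>2) + (LINT x|M. (cmod (\<rho> (aa l) x))\<^sup>2)) / 2"
    using bessel_finite[OF orthF F(1) aa_L2[of l]] bessel_finite[OF orthF F(1) rho_L2[OF aa_L2[of l]]]
    by simp
  also have "\<dots> \<le> (measure M (Aset l) + Cb\<^sup>2 * measure M (Aset l)) / 2"
    using rho_sq[OF aa_L2[of l]] by (simp add: aa_sq)
  also have "\<dots> = KK * measure M (Aset l)" by (simp add: KK_def algebra_simps)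
  finally show ?thesis .
qed

lemma g_summable: "(\<lambda>e. cmod (g e l)) summable_on B0"
  by (rule nonneg_bdd_above_summable_on) (use gsum in \<open>auto simp: bdd_above_def\<close>)

lemma g_infsum: "infsum (\<lambda>e. cmod (g e l)) B0 \<le> KK * measure M (Aset l)"
  by (rule infsum_le_finite_sums[OF g_summable gsum])

lemma EE_sub: "EE \<subseteq> B0" by (auto simp: EE_def)

end

context main
begin

lemma main_has_sum:
  "((\<lambda>e. inner_L2 M e (\<rho> (quant_pos M pp e))) has_sum
     (LINT l|lborel. complex_of_real (indicator {0..} l) * mu_rho M \<rho> (Aset l))) B0"
proof -
  interpret P2: pair_sigma_finite "count_space EE" lborel
    by (simp add: pair_sigma_finite_def sigma_finite_measure_count_space_countable[OF EE_countable] sigma_finite_lborel)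
  define \<Phi> where "\<Phi> e l = complex_of_real (indicator {0..} l) * g e l" for e l
  have EL2: "e \<in> L2 M" if "e \<in> EE" for e using that EE_sub B0_L2 by blast
  have \<Phi>m: "(\<lambda>(e, l). \<Phi> e l) \<in> borel_measurable (count_space EE \<Otimes>\<^sub>M lborel)"
  proof (rule measurable_pair_measure_countable1[OF EE_countable])
    fix e assume "e \<in> EE"
    then show "(\<lambda>l. case (e, l) of (e, l) \<Rightarrow> \<Phi> e l) \<in> borel_measurable lborel"
      unfolding \<Phi>_def case_prod_conv by (intro borel_measurable_integrable G3(1) EL2)
  qed
  have nnb: "(\<integral>\<^sup>+ e. ennreal (norm (\<Phi> e l)) \<partial>count_space EE) \<le> ennreal (indicator {0..} l * (KK * measure M (Aset l)))" for l
  proof -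
    have s1: "(\<lambda>e. cmod (g e l)) summable_on EE"
      by (rule summable_on_subset_banach[OF g_summable EE_sub])
    have nf: "norm (\<Phi> e l) = indicator {0..} l * cmod (g e l)" for e
      by (simp add: \<Phi>_def norm_mult)
    have s2: "(\<lambda>e. norm (\<Phi> e l)) summable_on EE"
      unfolding nf by (rule summable_on_cmult_right[OF s1])
    have s3: "Infinite_Set_Sum.abs_summable_on (\<lambda>e. norm (\<Phi> e l)) EE"
      using s2 abs_summable_equivalent[of "\<lambda>e. norm (\<Phi> e l)" EE] by simp
    have "(\<integral>\<^sup>+ e. ennreal (norm (\<Phi> e l)) \<partial>count_space EE) = ennreal (infsetsum (\<lambda>e. norm (\<Phi> e l)) EE)"
      by (rule nn_integral_conv_infsetsum[OF s3]) simp
    also have "infsetsum (\<lambda>e. norm (\<Phi> e l)) EE = infsum (\<lambda>e. norm (\<Phi> e l)) EE"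
      by (rule infsetsum_infsum[OF s3])
    also have "\<dots> = indicator {0..} l * infsum (\<lambda>e. cmod (g e l)) EE"
      unfolding nf by (rule infsum_cmult_right) (use s1 in simp)
    also have "\<dots> \<le> indicator {0..} l * (KK * measure M (Aset l))"
    proof (rule mult_left_mono)
      have "infsum (\<lambda>e. cmod (g e l)) EE \<le> infsum (\<lambda>e. cmod (g e l)) B0"
        by (rule infsum_mono_neutral[OF s1 g_summable]) (use EE_sub in auto)
      also have "\<dots> \<le> KK * measure M (Aset l)" by (rule g_infsum)
      finally show "infsum (\<lambda>e. cmod (g e l)) EE \<le> KK * measure M (Aset l)" .
    qed simp
    finally show ?thesis by (simp add: ennreal_leI)
  qed
  have \<Phi>int: "integrable (count_space EE \<Otimes>\<^sub>M lborel) (\<lambda>(e, l). \<Phi> e l)"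
  proof (rule integrableI_bounded)
    show "(\<lambda>(e, l). \<Phi> e l) \<in> borel_measurable (count_space EE \<Otimes>\<^sub>M lborel)" by (rule \<Phi>m)
    have m2: "(\<lambda>z. ennreal (norm (case z of (e, l) \<Rightarrow> \<Phi> e l))) \<in> borel_measurable (count_space EE \<Otimes>\<^sub>M lborel)"
      using \<Phi>m by measurable
    have "(\<integral>\<^sup>+ z. ennreal (norm (case z of (e, l) \<Rightarrow> \<Phi> e l)) \<partial>(count_space EE \<Otimes>\<^sub>M lborel))
        = (\<integral>\<^sup>+ l. (\<integral>\<^sup>+ e. ennreal (norm (case (e, l) of (e, l) \<Rightarrow> \<Phi> e l)) \<partial>count_space EE) \<partial>lborel)"
      by (rule P2.nn_integral_snd[OF m2, symmetric])
    also have "\<dots> \<le> (\<integral>\<^sup>+ l. ennreal (indicator {0..} l * (KK * measure M (Aset l))) \<partial>lborel)"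
      by (rule nn_integral_mono) (simp add: nnb)
    also have "\<dots> < \<infinity>"
    proof -
      have "integrable lborel (\<lambda>l. indicator {0..} l * measure M (Aset l) * KK)"
        using meas_int unfolding Aset_def by (rule integrable_mult_left)
      then have "integrable lborel (\<lambda>l. indicator {0..} l * (KK * measure M (Aset l)))"
        by (simp add: ac_simps)
      moreover have "\<bar>indicator {0..} l * (KK * measure M (Aset l))\<bar> = indicator {0..} l * (KK * measure M (Aset l))" for l :: real
        by (rule abs_of_nonneg) (auto simp: KK_def)
      ultimately show ?thesis
        by (simp add: integrable_iff_bounded)
    qed
    finally show "(\<integral>\<^sup>+ z. ennreal (norm (case z of (e, l) \<Rightarrow> \<Phi> e l)) \<partial>(count_space EE \<Otimes>\<^sub>M lborel)) < \<infinity>" .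
  qed
  have fub: "(LINT l|lborel. LINT e|count_space EE. \<Phi> e l) = (LINT e|count_space EE. LINT l|lborel. \<Phi> e l)"
    using \<Phi>int by (rule P2.Fubini_integral)
  have intfst: "integrable (count_space EE) (\<lambda>e. LINT l|lborel. \<Phi> e l)"
    using \<Phi>int by (rule P2.integrable_fst)
  define q where "q e = inner_L2 M e (\<rho> (quant_pos M pp e))" for e
  have \<Phi>q: "(LINT l|lborel. \<Phi> e l) = q e" if "e \<in> EE" for e
    unfolding \<Phi>_def q_def by (rule G3(2)[OF EL2[OF that]])
  have qint: "integrable (count_space EE) q"
    using intfst by (rule Bochner_Integration.integrable_cong[THEN iffD1, rotated 2]) (auto simp: \<Phi>q)
  have qabs: "Infinite_Set_Sum.abs_summable_on q EE"
    using qint by (simp add: Infinite_Set_Sum.abs_summable_on_def)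
  have qsum: "q summable_on EE"
    using qabs abs_summable_equivalent[of q EE] abs_summable_summable by blast
  have rhs: "(LINT e|count_space EE. LINT l|lborel. \<Phi> e l) = infsum q EE"
  proof -
    have "(LINT e|count_space EE. LINT l|lborel. \<Phi> e l) = (LINT e|count_space EE. q e)"
      by (rule Bochner_Integration.integral_cong[OF refl]) (simp add: \<Phi>q)
    also have "\<dots> = infsetsum q EE" by (simp add: infsetsum_def)
    also have "\<dots> = infsum q EE" by (rule infsetsum_infsum[OF qabs])
    finally show ?thesis .
  qed
  have lhs: "(LINT e|count_space EE. \<Phi> e l) = complex_of_real (indicator {0..} l) * mu_rho M \<rho> (Aset l)" for l
  proof -
    have s1: "(\<lambda>e. cmod (g e l)) summable_on EE"
      by (rule summable_on_subset_banach[OF g_summable EE_sub])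
    have gabs: "Infinite_Set_Sum.abs_summable_on (\<lambda>e. g e l) EE"
      using s1 abs_summable_equivalent[of "\<lambda>e. g e l" EE] by simp
    have "(LINT e|count_space EE. \<Phi> e l) = complex_of_real (indicator {0..} l) * (LINT e|count_space EE. g e l)"
      unfolding \<Phi>_def by (rule integral_mult_right_zero)
    also have "(LINT e|count_space EE. g e l) = infsetsum (\<lambda>e. g e l) EE" by (simp add: infsetsum_def)
    also have "\<dots> = infsum (\<lambda>e. g e l) EE" by (rule infsetsum_infsum[OF gabs])
    also have "\<dots> = infsum (\<lambda>e. g e l) B0"
      by (rule infsum_cong_neutral) (use EE_sub g_zero in auto)
    also have "\<dots> = mu_rho M \<rho> (Aset l)" by (rule G2[symmetric])
    finally show ?thesis .
  qed
  have total: "(LINT l|lborel. complex_of_real (indicator {0..} l) * mu_rho M \<rho> (Aset l)) = infsum q EE"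
  proof -
    have "(LINT l|lborel. complex_of_real (indicator {0..} l) * mu_rho M \<rho> (Aset l)) = (LINT l|lborel. LINT e|count_space EE. \<Phi> e l)"
      by (simp add: lhs)
    also have "\<dots> = infsum q EE" using fub rhs by simp
    finally show ?thesis .
  qed
  have "(q has_sum infsum q EE) EE" using qsum by (rule has_sum_infsum)
  moreover have "q e = 0" if "e \<in> B0 - EE" for e
  proof -
    have "q e = (LINT l|lborel. complex_of_real (indicator {0..} l) * g e l)"
      unfolding q_def using that by (intro G3(2)[symmetric] B0_L2) auto
    also have "\<dots> = 0" using that by (simp add: g_zero)
    finally show ?thesis .
  qed
  ultimately have "(q has_sum infsum q EE) B0"
    by (subst (asm) has_sum_cong_neutral[where T=B0 and g=q]) (use EE_sub in auto)
  then show ?thesis unfolding total q_def .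
qed

end

context dens
begin

lemma Q_diff_right:
  assumes "a \<in> L2 M" "u \<in> L2 M" "v \<in> L2 M"
  shows "inner_L2 M a (\<rho> (\<lambda>y. u y - v y)) = inner_L2 M a (\<rho> u) - inner_L2 M a (\<rho> v)"
proof -
  have mv: "(\<lambda>y. (-1) * v y) \<in> L2 M" using assms(3) by (rule L2_scale)
  have "(\<lambda>y. u y - v y) = (\<lambda>y. u y + (-1) * v y)" by simp
  then have "inner_L2 M a (\<rho> (\<lambda>y. u y - v y)) = inner_L2 M a (\<rho> u) + inner_L2 M a (\<rho> (\<lambda>y. (-1) * v y))"
    using Q_add_right[OF assms(1,2) mv] by simp
  also have "inner_L2 M a (\<rho> (\<lambda>y. (-1) * v y)) = - inner_L2 M a (\<rho> v)"
    using Q_scale_right[OF assms(1,3), of "-1"] by simp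
  finally show ?thesis by simp
qed

end

lemma set_int_conv:
  "(LINT l:{0..}|lborel. F l) = (LINT l|lborel. complex_of_real (indicator {0..} l) * F l)"
  unfolding set_lebesgue_integral_def by (simp add: scaleR_conv_of_real)

theorem mainTheorem14:
  fixes M :: "'a measure"
    and \<rho> :: "('a \<Rightarrow> complex) \<Rightarrow> ('a \<Rightarrow> complex)"
    and f :: "'a \<Rightarrow> real"
  assumes "prob_space M"
    and "density_op M \<rho>"
    and "f \<in> borel_measurable M"
    and "integrable M (\<lambda>x. (f x)\<^sup>2)"
  shows "q_integral M \<rho> f =
           (LINT l:{0..}|lborel. mu_rho M \<rho> {x\<in>space M. f x > l})
         - (LINT l:{0..}|lborel. mu_rho M \<rho> {x\<in>space M. f x < - l})"
proof -
  have bo: "bounded_op M \<rho>" and po: "positive_op M \<rho>" using assms(2) by (auto simp: density_op_def)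
  interpret M1: main M \<rho> f
    by (intro main.intro dens.intro hyp.intro hyp_axioms.intro dens_axioms.intro assms(1,3,4) bo po)
  interpret M2: main M \<rho> "\<lambda>x. - f x"
    by (intro main.intro dens.intro hyp.intro hyp_axioms.intro dens_axioms.intro assms(1) bo po) (use assms(3,4) in auto)
  define B where "B = (SOME B. onb M B)"
  have B1: "M1.B0 = B" by (simp add: M1.B0_def B_def)
  have B2: "M2.B0 = B" by (simp add: M2.B0_def B_def)
  have pp1: "M1.pp = (\<lambda>x. max (f x) 0)" by (rule ext) (simp add: M1.pp_def)
  have pp2: "M2.pp = (\<lambda>x. - min (f x) 0)" by (rule ext) (simp add: M2.pp_def)
  have A1: "M1.Aset l = {x\<in>space M. f x > l}" for l by (simp add: M1.Aset_def)
  have A2: "M2.Aset l = {x\<in>space M. f x < - l}" for l by (auto simp: M2.Aset_def)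
  define I1 where "I1 = (LINT l:{0..}|lborel. mu_rho M \<rho> {x\<in>space M. f x > l})"
  define I2 where "I2 = (LINT l:{0..}|lborel. mu_rho M \<rho> {x\<in>space M. f x < - l})"
  have h1: "((\<lambda>e. inner_L2 M e (\<rho> (quant_pos M (\<lambda>x. max (f x) 0) e))) has_sum I1) B"
    using M1.main_has_sum unfolding B1 pp1 A1 I1_def set_int_conv .
  have h2: "((\<lambda>e. inner_L2 M e (\<rho> (quant_pos M (\<lambda>x. - min (f x) 0) e))) has_sum I2) B"
    using M2.main_has_sum unfolding B2 pp2 A2 I2_def set_int_conv .
  have h2': "((\<lambda>e. - inner_L2 M e (\<rho> (quant_pos M (\<lambda>x. - min (f x) 0) e))) has_sum (- I2)) B"
    by (simp add: has_sum_uminus h2)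
  have "((\<lambda>e. inner_L2 M e (\<rho> (quant_pos M (\<lambda>x. max (f x) 0) e)) + - inner_L2 M e (\<rho> (quant_pos M (\<lambda>x. - min (f x) 0) e))) has_sum (I1 + - I2)) B"
    by (rule has_sum_add[OF h1 h2'])
  then have "((\<lambda>e. inner_L2 M e (\<rho> (quant_pos M (\<lambda>x. max (f x) 0) e)) + - inner_L2 M e (\<rho> (quant_pos M (\<lambda>x. - min (f x) 0) e))) has_sum (I1 - I2)) B"
    by (simp only: diff_conv_add_uminus)
  then have hs: "((\<lambda>e. inner_L2 M e (\<rho> (quant M f e))) has_sum (I1 - I2)) B"
  proof (rule has_sum_cong[THEN iffD1, rotated])
    fix e assume e: "e \<in> B"
    have eL2: "e \<in> L2 M" using e B1 M1.B0_L2 by blast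
    have q1: "quant_pos M (\<lambda>x. max (f x) 0) e \<in> L2 M" using M1.qp_L2[OF eL2] by (simp add: pp1)
    have q2: "quant_pos M (\<lambda>x. - min (f x) 0) e \<in> L2 M" using M2.qp_L2[OF eL2] by (simp add: pp2)
    show "inner_L2 M e (\<rho> (quant_pos M (\<lambda>x. max (f x) 0) e)) + - inner_L2 M e (\<rho> (quant_pos M (\<lambda>x. - min (f x) 0) e))
      = inner_L2 M e (\<rho> (quant M f e))"
      unfolding quant_def using M1.Q_diff_right[OF eL2 q1 q2] by simp
  qed
  have "q_integral M \<rho> f = infsum (\<lambda>e. inner_L2 M e (\<rho> (quant M f e))) B"
    by (simp add: q_integral_def tr_def B_def)
  also have "\<dots> = I1 - I2" by (rule infsumI[OF hs])
  finally show ?thesis by (simp add: I1_def I2_def)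
qed

end
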